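(* Let $d\ge 2$, let $\rho$ be a density operator on $\mathbb{C}^d$, and let $\{|i_m\rangle\}_{i=1}^d$, $m=1,\dots,M$, be $M$ mutually unbiased orthonormal bases of $\mathbb{C}^d$, with $p_{i_m}=\langle i_m|\rho|i_m\rangle$. Let $C>0$ be any number with $\sum_{m=1}^M\sum_{i=1}^d p_{i_m}^2\le C$ (for example $C=\operatorname{Tr}(\rho^2)+\frac{M-1}{d}$). Put $K=\lfloor M/C\rfloor$ and $a=M/C-K$. Then $$\sum_{m=1}^M H\{p_{i_m};i\}\ \ge\ aC(K+1)\log_2(K+1)+(1-a)CK\log_2K.$$
   Context: Orthonormal bases $\{|i_m\rangle\}_{i=1}^d$, $m=1,\dots,M$, of $\mathbb{C}^d$ are mutually unbiased if $|\langle i_m|j_n\rangle|^2=1/d$ for all $i,j$ and all $m\ne n$. $H\{p_{i_m};i\}=-\sum_{i=1}^d p_{i_m}\log_2 p_{i_m}$ is the Shannon entropy of the outcome distribution in the $m$th basis, with the convention $0\log_2 0=0$. *)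

theory Defs
  imports "HOL-Analysis.Analysis"
begin

text \<open>Vectors of \<open>\<complex>\<^sup>d\<close> are \<open>complex ^ 'n\<close> with \<open>d = CARD('n)\<close>;
  operators are \<open>complex ^ 'n ^ 'n\<close>.\<close>

definition cinner :: "complex ^ 'n \<Rightarrow> complex ^ 'n \<Rightarrow> complex" where
  "cinner x y = (\<Sum>j\<in>UNIV. cnj (x $ j) * y $ j)"

definition density_op :: "complex ^ 'n ^ 'n \<Rightarrow> bool" where
  "density_op \<rho> \<longleftrightarrow>
     (\<forall>i j. \<rho> $ i $ j = cnj (\<rho> $ j $ i)) \<and>
     (\<forall>v. 0 \<le> Re (cinner v (\<rho> *v v))) \<and>
     (\<Sum>i\<in>UNIV. \<rho> $ i $ i) = 1"

definition orthonormal_basis :: "('n \<Rightarrow> complex ^ 'n) \<Rightarrow> bool" where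
  "orthonormal_basis b \<longleftrightarrow>
     (\<forall>i j. cinner (b i) (b j) = (if i = j then 1 else 0))"

definition mutually_unbiased :: "nat \<Rightarrow> (nat \<Rightarrow> 'n \<Rightarrow> complex ^ 'n) \<Rightarrow> bool" where
  "mutually_unbiased M B \<longleftrightarrow>
     (\<forall>m<M. orthonormal_basis (B m)) \<and>
     (\<forall>m<M. \<forall>n<M. m \<noteq> n \<longrightarrow>
        (\<forall>i j. (cmod (cinner (B m i) (B n j)))\<^sup>2 = 1 / real CARD('n)))"

definition outcome_prob :: "complex ^ 'n ^ 'n \<Rightarrow> ('n \<Rightarrow> complex ^ 'n) \<Rightarrow> 'n \<Rightarrow> real" where
  "outcome_prob \<rho> b i = Re (cinner (b i) (\<rho> *v b i))"

definition shannon :: "('n::finite \<Rightarrow> real) \<Rightarrow> real" where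
  "shannon p = - (\<Sum>i\<in>UNIV. if p i = 0 then 0 else p i * log 2 (p i))"

end

theory Submission
  imports Defs "HOL-Real_Asymp.Real_Asymp"
begin


definition bet :: "real \<Rightarrow> real" where "bet k = k * (k+1) * (ln (k+1) - ln k)"
definition alp :: "real \<Rightarrow> real" where "alp k = (k+1) * ln (k+1) - k * ln k"
definition gK :: "real \<Rightarrow> real \<Rightarrow> real" where "gK k q = - ln q + bet k * q - alp k"
definition hK :: "real \<Rightarrow> real \<Rightarrow> real" where "hK k q = q * gK k q"

lemma Lbounds:
  fixes k :: real assumes "k \<ge> 1"
  shows "1/(k+1) \<le> ln (k+1) - ln k" "ln (k+1) - ln k \<le> 1/k"
proof -
  have e: "ln ((k+1)/k) = ln (k+1) - ln k" using assms by (simp add: ln_div)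
  have e2: "ln (k/(k+1)) = ln k - ln (k+1)" using assms by (simp add: ln_div)
  have "ln ((k+1)/k) \<le> (k+1)/k - 1" by (rule ln_le_minus_one) (use assms in auto)
  moreover have "(k+1)/k - 1 = 1/k" using assms by (simp add: field_simps)
  ultimately show "ln (k+1) - ln k \<le> 1/k" using e by simp
  have "ln (k/(k+1)) \<le> k/(k+1) - 1" by (rule ln_le_minus_one) (use assms in auto)
  moreover have "k/(k+1) - 1 = - (1/(k+1))" using assms by (simp add: field_simps)
  ultimately show "1/(k+1) \<le> ln (k+1) - ln k" using e2 by simp
qed

lemma bet_bounds: fixes k :: real assumes "k \<ge> 1" shows "k \<le> bet k" "bet k \<le> k+1"
proof -
  have p: "k*(k+1) \<ge> 0" using assms by simp
  have a: "k*(k+1)*(1/(k+1)) = k" "k*(k+1)*(1/k) = k+1" using assms by auto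
  show "k \<le> bet k" using mult_left_mono[OF Lbounds(1)[OF assms] p] a
    unfolding bet_def by simp
  show "bet k \<le> k+1" using mult_left_mono[OF Lbounds(2)[OF assms] p] a
    unfolding bet_def by simp
qed

lemma g_r: fixes k :: real assumes "k \<ge> 1" shows "gK k (1/(k+1)) = 0"
  using assms unfolding gK_def bet_def alp_def by (simp add: ln_div field_simps)

lemma g_R: fixes k :: real assumes "k \<ge> 1" shows "gK k (1/k) = 0"
  using assms unfolding gK_def bet_def alp_def by (simp add: ln_div field_simps)

lemma g_small: fixes k q :: real assumes "k \<ge> 1" "0 < q" "q \<le> 1/(k+1)"
  shows "gK k q \<ge> 0"
proof -
  have "ln (q*(k+1)) \<le> q*(k+1) - 1" by (rule ln_le_minus_one) (use assms in auto)
  hence l: "ln q + ln (k+1) \<le> q*(k+1) - 1" using assms by (simp add: ln_mult)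
  have "gK k q = gK k q - gK k (1/(k+1))" using g_r[OF assms(1)] by simp
  also have "\<dots> = -ln q - ln (k+1) - bet k * (1/(k+1) - q)"
    using assms unfolding gK_def by (simp add: ln_div right_diff_distrib)
  also have "\<dots> \<ge> (1 - q*(k+1)) - bet k * (1/(k+1) - q)" using l by linarith
  finally have a: "gK k q \<ge> (1/(k+1) - q) * ((k+1) - bet k)" using assms by (simp add: field_simps)
  have "(1/(k+1) - q) * ((k+1) - bet k) \<ge> 0" using assms bet_bounds[OF assms(1)] by simp
  with a show ?thesis by linarith
qed

lemma g_large: fixes k q :: real assumes "k \<ge> 1" "1/k \<le> q"
  shows "gK k q \<ge> 0"
proof -
  have qp: "q > 0" using assms by (smt (verit) divide_pos_pos)
  have "ln (q*k) \<le> q*k - 1" by (rule ln_le_minus_one) (use assms qp in auto)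
  hence l: "ln q + ln k \<le> q*k - 1" using assms qp by (simp add: ln_mult)
  have "gK k q = gK k q - gK k (1/k)" using g_R[OF assms(1)] by simp
  also have "\<dots> = -ln q - ln k + bet k * (q - 1/k)"
    using assms unfolding gK_def by (simp add: ln_div right_diff_distrib)
  also have "\<dots> \<ge> (1 - q*k) + bet k * (q - 1/k)" using l by linarith
  finally have a: "gK k q \<ge> (q - 1/k) * (bet k - k)" using assms by (simp add: field_simps)
  have "(q - 1/k) * (bet k - k) \<ge> 0" using assms bet_bounds[OF assms(1)] by simp
  with a show ?thesis by linarith
qed

lemma g_dec: fixes k u v :: real assumes "k \<ge> 1" "0 < u" "u \<le> v" "v \<le> 1 / bet k"
  shows "gK k v \<le> gK k u"
proof -
  have bp: "bet k > 0" using bet_bounds[OF assms(1)] assms by linarith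
  have vp: "v > 0" using assms by linarith
  have "ln (u/v) \<le> u/v - 1" by (rule ln_le_minus_one) (use assms vp in auto)
  hence l: "ln u - ln v \<le> u/v - 1" using assms vp by (simp add: ln_div)
  have "bet k * v \<le> 1" using assms bp by (simp add: field_simps)
  hence "(bet k * v) * (v - u) \<le> 1 * (v - u)" using assms by (intro mult_right_mono) auto
  hence "bet k * (v - u) \<le> (v - u) / v" using vp
    by (simp add: field_simps)
  moreover have "(v-u)/v = 1 - u/v" using vp by (simp add: field_simps)
  moreover have "bet k * (v - u) = bet k * v - bet k * u" by (simp add: algebra_simps)
  ultimately show ?thesis using l unfolding gK_def by linarith
qed

lemma h_subadd: fixes k a b :: real assumes "k \<ge> 1" "0 \<le> a" "0 \<le> b" "a + b \<le> 1 / bet k"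
  shows "hK k (a+b) \<le> hK k a + hK k b"
proof (cases "a = 0 \<or> b = 0")
  case True then show ?thesis by (auto simp: hK_def)
next
  case False
  then have ap: "a > 0" and bp: "b > 0" using assms by auto
  have "gK k (a+b) \<le> gK k a" by (rule g_dec) (use assms ap bp in auto)
  hence 1: "a * gK k (a+b) \<le> a * gK k a" using ap by simp
  have "gK k (a+b) \<le> gK k b" by (rule g_dec) (use assms ap bp in auto)
  hence 2: "b * gK k (a+b) \<le> b * gK k b" using bp by simp
  show ?thesis using 1 2 unfolding hK_def by (simp add: distrib_right)
qed



definition hdv :: "real \<Rightarrow> real \<Rightarrow> real" where "hdv k q = - ln q - 1 + 2 * bet k * q - alp k"

lemma h_deriv: assumes "q > 0" shows "(hK k has_real_derivative hdv k q) (at q)"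
proof -
  have e: "hK k = (\<lambda>q. - (q * ln q) + bet k * q^2 - alp k * q)"
    by (rule ext) (simp add: hK_def gK_def algebra_simps power2_eq_square)
  show ?thesis unfolding e
    by (rule derivative_eq_intros refl | use assms in force)+ (use assms in \<open>simp add: hdv_def algebra_simps\<close>)
qed

lemma h_convex: assumes "k \<ge> 1" shows "convex_on {1/(2*bet k)..} (hK k)"
proof -
  have bp: "bet k > 0" using bet_bounds[OF assms] assms by linarith
  show ?thesis
  proof (rule convex_on_realI[where f' = "hdv k"])
    show "connected {1/(2*bet k)..}" by simp
    fix x assume "x \<in> {1/(2*bet k)..}"
    hence "x > 0" using bp by (smt (verit) atLeast_iff divide_pos_pos)
    thus "(hK k has_real_derivative hdv k x) (at x)" by (rule h_deriv)
  next
    fix x y assume xy: "x \<in> {1/(2*bet k)..}" "y \<in> {1/(2*bet k)..}" "x \<le> y"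
    hence xp: "x > 0" using bp by (smt (verit) atLeast_iff divide_pos_pos)
    have "ln (y/x) \<le> y/x - 1" by (rule ln_le_minus_one) (use xp xy in auto)
    hence l: "ln y - ln x \<le> (y - x)/x" using xp xy by (simp add: ln_div diff_divide_distrib)
    have "1/x \<le> 2 * bet k" using xy xp bp by (simp add: field_simps)
    hence "(1/x) * (y - x) \<le> (2 * bet k) * (y-x)" using xy by (intro mult_right_mono) auto
    with l have "ln y - ln x \<le> 2 * bet k * (y - x)" by simp
    thus "hdv k x \<le> hdv k y" unfolding hdv_def by (simp add: algebra_simps)
  qed
qed

lemma h_cont: "continuous_on {0..} (hK k)"
proof -
  have e: "hK k = (\<lambda>q. - (q * ln q) + bet k * q^2 - alp k * q)"
    by (rule ext) (simp add: hK_def gK_def algebra_simps power2_eq_square)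
  have c: "continuous_on {0..} (\<lambda>q::real. q * ln q)"
    unfolding continuous_on_def
  proof
    fix x :: real assume x: "x \<in> {0..}"
    show "((\<lambda>q. q * ln q) \<longlongrightarrow> x * ln x) (at x within {0..})"
    proof (cases "x = 0")
      case True
      have "((\<lambda>q::real. q * ln q) \<longlongrightarrow> 0) (at_right 0)" by real_asymp
      thus ?thesis using True by (simp add: at_within_Ici_at_right)
    next
      case False
      hence "x > 0" using x by auto
      hence "isCont (\<lambda>q. q * ln q) x" by (intro continuous_intros) auto
      thus ?thesis by (simp add: isCont_def tendsto_within_subset[OF _ subset_UNIV])
    qed
  qed
  show ?thesis unfolding e by (intro continuous_intros c)
qed



lemma dphi_mono:
  fixes k a b :: real
  assumes k: "k \<ge> 1" and a: "1/(k+1) \<le> a" and ab: "a \<le> b" and b: "b < 1/k"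
  shows "1/a + k/(1-k*a) \<le> 1/b + k/(1-k*b)"
proof -
  have ap: "a > 0" using a k by (smt (verit) divide_pos_pos)
  have bp: "b > 0" using ap ab by linarith
  have kb1: "k*b < 1" using b k by (simp add: field_simps)
  have ka1: "k*a < 1" using kb1 ab k by (smt (verit) mult_left_mono)
  have a1: "a*(k+1) \<ge> 1" using a k by (simp add: field_simps)
  have "k*a \<ge> a" using k ap by simp
  hence ha: "k*a \<ge> 1 - k*a" using a1 by (simp add: algebra_simps)
  have "b*(k+1) \<ge> 1" using a1 ab k by (smt (verit) mult_right_mono)
  moreover have "k*b \<ge> b" using k bp by simp
  ultimately have hb: "k*b \<ge> 1 - k*b" by (simp add: algebra_simps)
  have p: "(1-k*a)*(1-k*b) \<le> (k*a)*(k*b)"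
    using ha hb ka1 kb1 by (intro mult_mono) (use ap k in auto)
  have d1: "1/a - 1/b = (b-a) / (a*b)" using ap bp by (simp add: field_simps)
  have d2: "k/(1-k*b) - k/(1-k*a) = (b-a) * (k*k) / ((1-k*a)*(1-k*b))"
    using ka1 kb1 by (simp add: field_simps)
  have D: "(1-k*a)*(1-k*b) > 0" using ka1 kb1 by simp
  have "(k*k)/((k*a)*(k*b)) \<le> (k*k)/((1-k*a)*(1-k*b))"
    by (rule divide_left_mono[OF p]) (use D ap bp k in auto)
  moreover have "(k*k)/((k*a)*(k*b)) = 1/(a*b)" using k by (simp add: field_simps)
  ultimately have "1/(a*b) \<le> (k*k)/((1-k*a)*(1-k*b))" by simp
  hence "(b-a) * (1/(a*b)) \<le> (b-a) * ((k*k)/((1-k*a)*(1-k*b)))"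
    using ab by (intro mult_left_mono) auto
  hence "1/a - 1/b \<le> k/(1-k*b) - k/(1-k*a)" using d1 d2 by simp
  thus ?thesis by simp
qed

lemma F4:
  fixes k y :: real
  assumes k: "k \<ge> 1" and y1: "1/(k+1) \<le> y" and y2: "y \<le> 1/k"
  shows "0 \<le> k * hK k y + hK k (1 - k*y)"
proof (rule ccontr)
  define r where "r = 1/(k+1)"
  define R where "R = 1/k"
  define F where "F = (\<lambda>y. k * hK k y + hK k (1 - k*y))"
  define \<phi> where "\<phi> = (\<lambda>y. hdv k y - hdv k (1 - k*y))"
  define d\<phi> where "d\<phi> = (\<lambda>y. - 1/y - k/(1-k*y) + 2 * bet k * (1+k))"
  assume neg: "\<not> 0 \<le> k * hK k y + hK k (1 - k*y)"
  hence Fy: "F y < 0" unfolding F_def by simp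
  have rp: "r > 0" unfolding r_def using k by simp
  have rR: "r < R" unfolding r_def R_def using k by (simp add: field_simps)
  have kr: "1 - k*r = r" unfolding r_def using k by (simp add: field_simps)
  have kR: "1 - k*R = 0" unfolding R_def using k by simp
  have Fr: "F r = 0" unfolding F_def kr using g_r[OF k] by (simp add: hK_def r_def)
  have FR: "F R = 0" unfolding F_def kR using g_R[OF k] by (simp add: hK_def R_def)
  have \<phi>r: "\<phi> r = 0" unfolding \<phi>_def kr by simp
  have pos1: "1 - k*z > 0" if "z < R" for z using that k unfolding R_def by (simp add: field_simps)
  have Fder: "DERIV F z :> k * \<phi> z" if "r \<le> z" "z < R" for z
  proof -
    have zp: "z > 0" using that rp by linarith
    have d1: "(hK k has_real_derivative hdv k z) (at z)" by (rule h_deriv[OF zp])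
    have d2: "(hK k has_real_derivative hdv k (1-k*z)) (at (1-k*z))" by (rule h_deriv[OF pos1[OF that(2)]])
    have "((\<lambda>y. hK k (1 - k*y)) has_real_derivative hdv k (1-k*z) * (0 - k * 1)) (at z)"
      by (rule DERIV_chain2[of "hK k" _ "\<lambda>y. 1 - k*y" z, OF d2]) (auto intro!: derivative_eq_intros)
    moreover have "((\<lambda>z. k * hK k z) has_real_derivative k * hdv k z) (at z)"
      using DERIV_cmult[OF d1, of k] by simp
    ultimately have "DERIV F z :> k * hdv k z + hdv k (1-k*z) * (0 - k*1)"
      unfolding F_def using DERIV_add by blast
    thus ?thesis unfolding \<phi>_def by (simp add: algebra_simps)
  qed
  have \<phi>der: "DERIV \<phi> z :> d\<phi> z" if "r \<le> z" "z < R" for z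
  proof -
    have zp: "z > 0" using that rp by linarith
    have p1: "1 - k*z > 0" by (rule pos1[OF that(2)])
    have e: "\<phi> = (\<lambda>y. - ln y - 1 + 2 * bet k * y - alp k - (- ln (1-k*y) - 1 + 2 * bet k * (1-k*y) - alp k))"
      unfolding \<phi>_def hdv_def by simp
    show ?thesis unfolding e
      by (rule derivative_eq_intros refl | use zp p1 in force)+
         (use zp p1 in \<open>simp add: d\<phi>_def field_simps\<close>)
  qed
  have dmono: "d\<phi> b \<le> d\<phi> a" if "r \<le> a" "a \<le> b" "b < R" for a b
    using dphi_mono[OF k, of a b] that unfolding d\<phi>_def r_def R_def by simp
  have ry: "r < y" using Fy Fr y1 unfolding r_def by (cases "y = 1/(k+1)") auto
  have yR: "y < R" using Fy FR y2 unfolding R_def by (cases "y = 1/k") auto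
  have "\<exists>z. r < z \<and> z < y \<and> F y - F r = (y - r) * (k * \<phi> z)"
    by (rule MVT2[OF ry, where f'="\<lambda>z. k * \<phi> z"], rule Fder) (use yR in auto)
  then obtain \<xi>1 where x1: "r < \<xi>1" "\<xi>1 < y" "F y - F r = (y - r) * (k * \<phi> \<xi>1)" by blast
  have "(y - r) * (k * \<phi> \<xi>1) < 0" using x1 Fy Fr by simp
  hence "k * \<phi> \<xi>1 < 0" using ry by (simp add: mult_less_0_iff)
  hence \<phi>1: "\<phi> \<xi>1 < 0" using k by (simp add: mult_less_0_iff)
  have contF: "continuous_on {y..R} F"
  proof -
    have c1: "continuous_on {y..R} (hK k)" by (rule continuous_on_subset[OF h_cont]) (use ry rp in auto)
    have "continuous_on {y..R} (\<lambda>z. 1 - k*z)" by (intro continuous_intros)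
    moreover have "(\<lambda>z. 1 - k*z) ` {y..R} \<subseteq> {0..}"
    proof
      fix w assume "w \<in> (\<lambda>z. 1 - k*z) ` {y..R}"
      then obtain z where "z \<in> {y..R}" "w = 1 - k*z" by auto
      moreover have "k*z \<le> k*R" using \<open>z \<in> {y..R}\<close> k by (intro mult_left_mono) auto
      ultimately show "w \<in> {0..}" using kR by auto
    qed
    ultimately have c2: "continuous_on {y..R} (\<lambda>z. hK k (1 - k*z))"
      using continuous_on_compose2[OF h_cont] by blast
    show ?thesis unfolding F_def by (intro continuous_intros c1 c2)
  qed
  have dif: "F differentiable (at x)" if "y < x" "x < R" for x
  proof -
    have "DERIV F x :> k * \<phi> x" by (rule Fder) (use that ry in auto)
    thus ?thesis unfolding real_differentiable_def by blast
  qed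
  obtain l \<xi>2 where x2: "y < \<xi>2" "\<xi>2 < R" "DERIV F \<xi>2 :> l" "F R - F y = (R - y) * l"
    using MVT[OF yR contF dif] by blast
  have "DERIV F \<xi>2 :> k * \<phi> \<xi>2" by (rule Fder) (use x2 ry in auto)
  hence "l = k * \<phi> \<xi>2" using DERIV_unique[OF x2(3)] by blast
  moreover have "(R - y) * l > 0" using x2 FR Fy by simp
  ultimately have "k * \<phi> \<xi>2 > 0" using yR by (simp add: zero_less_mult_iff)
  hence \<phi>2: "\<phi> \<xi>2 > 0" using k by (simp add: zero_less_mult_iff)
  have "\<exists>z. r < z \<and> z < \<xi>1 \<and> \<phi> \<xi>1 - \<phi> r = (\<xi>1 - r) * d\<phi> z"
    by (rule MVT2[OF x1(1), where f'="d\<phi>"], rule \<phi>der) (use x1 yR in auto)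
  then obtain \<eta> where e1: "r < \<eta>" "\<eta> < \<xi>1" "\<phi> \<xi>1 - \<phi> r = (\<xi>1 - r) * d\<phi> \<eta>" by blast
  have "(\<xi>1 - r) * d\<phi> \<eta> < 0" using e1 \<phi>1 \<phi>r by simp
  hence "d\<phi> \<eta> < 0" using x1 by (simp add: mult_less_0_iff)
  have x12: "\<xi>1 < \<xi>2" using x1 x2 by linarith
  have "\<exists>z. \<xi>1 < z \<and> z < \<xi>2 \<and> \<phi> \<xi>2 - \<phi> \<xi>1 = (\<xi>2 - \<xi>1) * d\<phi> z"
    by (rule MVT2[OF x12, where f'="d\<phi>"], rule \<phi>der) (use x1 x2 ry in auto)
  then obtain \<theta> where e2: "\<xi>1 < \<theta>" "\<theta> < \<xi>2" "\<phi> \<xi>2 - \<phi> \<xi>1 = (\<xi>2 - \<xi>1) * d\<phi> \<theta>" by blast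
  have "(\<xi>2 - \<xi>1) * d\<phi> \<theta> > 0" using e2 \<phi>1 \<phi>2 by simp
  hence "d\<phi> \<theta> > 0" using x12 by (simp add: zero_less_mult_iff)
  moreover have "d\<phi> \<theta> \<le> d\<phi> \<eta>" using dmono[of \<eta> \<theta>] e1 e2 x2 by linarith
  ultimately show False using \<open>d\<phi> \<eta> < 0\<close> by linarith
qed



lemma h0[simp]: "hK k 0 = 0" by (simp add: hK_def)

lemma h_nonneg_small: assumes "k \<ge> 1" "0 \<le> q" "q \<le> 1/(k+1)" shows "hK k q \<ge> 0"
proof (cases "q = 0")
  case False thus ?thesis using g_small[OF assms(1), of q] assms unfolding hK_def by simp
qed simp

lemma h_nonneg_large: assumes "k \<ge> 1" "1/k \<le> q" shows "hK k q \<ge> 0"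
proof -
  have "q > 0" using assms by (smt (verit) divide_pos_pos)
  thus ?thesis using g_large[OF assms] unfolding hK_def by simp
qed

lemma final_case:
  fixes K n :: nat and x y :: real
  assumes K: "K \<ge> 1" and n: "n \<ge> 1" and x0: "0 \<le> x" and xs: "x \<le> 1/(real K+1)"
    and y1: "1/(real n+1) \<le> y" and y2: "y \<le> 1/real n" and xy: "x = 1 - real n * y"
  shows "0 \<le> real n * hK (real K) y + hK (real K) x"
proof -
  have k: "real K \<ge> 1" using K by simp
  have hx: "hK (real K) x \<ge> 0" by (rule h_nonneg_small[OF k x0 xs])
  consider "n = K" | "n \<ge> K+1" | "n + 1 \<le> K" by linarith
  then show ?thesis
  proof cases
    case 1 thus ?thesis using F4[OF k, of y] y1 y2 xy by simp
  next
    case 2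
    have "1/real n \<le> 1/(real K+1)" using 2 K by (simp add: frac_le)
    moreover have "0 \<le> 1/(real n+1)" by simp
    ultimately have "hK (real K) y \<ge> 0" using h_nonneg_small[OF k, of y] y1 y2 by linarith
    thus ?thesis using hx n by simp
  next
    case 3
    have "1/real K \<le> 1/(real n+1)" using 3 n by (simp add: frac_le)
    hence "hK (real K) y \<ge> 0" using h_nonneg_large[OF k, of y] y1 by simp
    thus ?thesis using hx n by simp
  qed
qed

lemma core:
  fixes K :: nat
  assumes K: "K \<ge> 1"
  shows "finite A \<Longrightarrow> (\<forall>i\<in>A. f i \<ge> 0) \<Longrightarrow> sum f A = 1 \<Longrightarrow> 0 \<le> (\<Sum>i\<in>A. hK (real K) (f i))"
proof (induction "card A" arbitrary: A f rule: less_induct)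
  case less
  define k where "k = real K"
  have k: "k \<ge> 1" using K unfolding k_def by simp
  have bp: "bet k \<ge> k" using bet_bounds[OF k] by simp
  have bpos: "bet k > 0" using bp k by linarith
  show ?case
  proof (cases "\<exists>i\<in>A. \<exists>j\<in>A. i \<noteq> j \<and> f i + f j \<le> 1 / bet k")
    case True
    then obtain i j where ij: "i \<in> A" "j \<in> A" "i \<noteq> j" "f i + f j \<le> 1 / bet k" by blast
    define A' where "A' = A - {j}"
    define f' where "f' = f(i := f i + f j)"
    have fA': "finite A'" using less.prems unfolding A'_def by simp
    have cA': "card A' < card A" unfolding A'_def by (rule card_Diff1_less[OF less.prems(1) ij(2)])
    have iA': "i \<in> A'" using ij unfolding A'_def by simp
    have rest: "A' - {i} = A - {i} - {j}" unfolding A'_def by auto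
    have s1: "sum f' A' = f' i + sum f' (A' - {i})" using sum.remove[OF fA' iA'] by simp
    have s2: "sum f' (A' - {i}) = sum f (A - {i} - {j})" unfolding rest f'_def by (rule sum.cong) auto
    have s3: "sum f A = f i + sum f (A - {i})" using sum.remove[OF less.prems(1) ij(1)] by simp
    have s4: "sum f (A - {i}) = f j + sum f (A - {i} - {j})"
      using sum.remove[of "A - {i}" j f] less.prems ij by simp
    have sumA': "sum f' A' = 1" using s1 s2 s3 s4 less.prems(3) unfolding f'_def by simp
    have nnA': "\<forall>i\<in>A'. f' i \<ge> 0" using less.prems(2) ij unfolding f'_def A'_def by auto
    have IH: "0 \<le> (\<Sum>i\<in>A'. hK (real K) (f' i))"
      using less.hyps[OF cA' fA' nnA' sumA'] by simp
    have t1: "(\<Sum>i\<in>A'. hK k (f' i)) = hK k (f i + f j) + (\<Sum>l\<in>A - {i} - {j}. hK k (f l))"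
      using sum.remove[OF fA' iA', of "\<lambda>l. hK k (f' l)"] unfolding rest
      by (simp add: f'_def)
    have t2: "(\<Sum>l\<in>A. hK k (f l)) = hK k (f i) + hK k (f j) + (\<Sum>l\<in>A - {i} - {j}. hK k (f l))"
      using sum.remove[OF less.prems(1) ij(1), of "\<lambda>l. hK k (f l)"]
        sum.remove[of "A - {i}" j "\<lambda>l. hK k (f l)"] less.prems ij by simp
    have "hK k (f i + f j) \<le> hK k (f i) + hK k (f j)"
      by (rule h_subadd[OF k]) (use less.prems ij in auto)
    thus ?thesis using IH t1 t2 unfolding k_def by linarith
  next
    case False
    define s0 where "s0 = 1 / (2 * bet k)"
    have s0p: "s0 > 0" unfolding s0_def using bpos by simp
    have s0r: "s0 \<le> 1/(k+1)" unfolding s0_def using bp k bpos by (simp add: field_simps)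
    have "1/(k+1) < 1" using k by simp
    hence s0h: "s0 < 1" using s0r by linarith
    define S where "S = {i\<in>A. f i > s0}"
    define T where "T = A - S"
    have fS: "finite S" "finite T" using less.prems unfolding S_def T_def by auto
    have AST: "A = S \<union> T" "S \<inter> T = {}" unfolding S_def T_def by auto
    have Tle: "f i \<le> s0" if "i \<in> T" for i using that unfolding T_def S_def by auto
    have Tuniq: "i = j" if "i \<in> T" "j \<in> T" for i j
    proof (rule ccontr)
      assume "i \<noteq> j"
      moreover have "f i + f j \<le> 1 / bet k" using Tle[OF that(1)] Tle[OF that(2)]
        unfolding s0_def by simp
      ultimately show False using False that unfolding T_def by auto
    qed
    define x where "x = sum f T"
    have hT: "(\<Sum>i\<in>T. hK k (f i)) = hK k x \<and> 0 \<le> x \<and> x \<le> s0"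
    proof (cases "T = {}")
      case True thus ?thesis unfolding x_def using s0p by simp
    next
      case False
      then obtain t where t: "t \<in> T" by auto
      hence "T = {t}" using Tuniq by auto
      thus ?thesis unfolding x_def using Tle[OF t] less.prems(2) t unfolding T_def by auto
    qed
    have sumS: "sum f S = 1 - x" using less.prems(3) sum.union_disjoint[OF fS AST(2), of f] AST(1)
      unfolding x_def by simp
    have Sne: "S \<noteq> {}"
    proof
      assume "S = {}"
      hence "x = 1" using sumS by simp
      thus False using hT s0h by simp
    qed
    define n where "n = card S"
    have n1: "n \<ge> 1" unfolding n_def using Sne fS by (simp add: Suc_le_eq card_gt_0_iff)
    define y where "y = (1 - x) / real n"
    have conv: "convex_on {s0..} (hK k)" using h_convex[OF k] unfolding s0_def by simp
    have "hK k (\<Sum>i\<in>S. (1/real n) *\<^sub>R f i) \<le> (\<Sum>i\<in>S. (1/real n) * hK k (f i))"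
      by (rule convex_on_sum[OF fS(1) Sne conv]) (use n1 n_def S_def in auto)
    moreover have "(\<Sum>i\<in>S. (1/real n) *\<^sub>R f i) = y"
      unfolding y_def using sumS by (simp add: sum_divide_distrib[symmetric])
    moreover have "(\<Sum>i\<in>S. (1/real n) * hK k (f i)) = (1/real n) * (\<Sum>i\<in>S. hK k (f i))"
      by (simp add: sum_distrib_left)
    ultimately have "hK k y \<le> (1/real n) * (\<Sum>i\<in>S. hK k (f i))" by simp
    hence "real n * hK k y \<le> real n * ((1/real n) * (\<Sum>i\<in>S. hK k (f i)))"
      by (intro mult_left_mono) auto
    hence jen: "real n * hK k y \<le> (\<Sum>i\<in>S. hK k (f i))" using n1 by simp
    have tot: "(\<Sum>i\<in>A. hK k (f i)) = (\<Sum>i\<in>S. hK k (f i)) + hK k x"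
      using sum.union_disjoint[OF fS AST(2), of "\<lambda>i. hK k (f i)"] AST(1) hT by simp
    have "real n * s0 \<le> sum f S"
    proof -
      have "(\<Sum>i\<in>S. s0) \<le> sum f S" by (rule sum_mono) (simp add: S_def)
      thus ?thesis unfolding n_def by simp
    qed
    moreover have "real n * x \<le> real n * s0" using hT by (intro mult_left_mono) auto
    ultimately have "x * real n \<le> 1 - x" using sumS by (simp add: algebra_simps)
    hence xy: "x \<le> y" using n1 unfolding y_def by (simp add: pos_le_divide_eq)
    have xeq: "x = 1 - real n * y" unfolding y_def using n1 by simp
    have y2: "y \<le> 1 / real n" unfolding y_def using hT n1 by (simp add: divide_right_mono)
    have y1: "1/(real n + 1) \<le> y"
    proof -
      have "1 \<le> (real n + 1) * y" using xy xeq by (simp add: algebra_simps)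
      thus ?thesis by (simp add: field_simps)
    qed
    have "0 \<le> real n * hK (real K) y + hK (real K) x"
      by (rule final_case[OF K n1]) (use hT s0r xy y1 y2 xeq k_def in auto)
    thus ?thesis using jen tot unfolding k_def by linarith
  qed
qed



lemma onb_complete:
  fixes b :: "'n::finite \<Rightarrow> complex ^ 'n"
  assumes "orthonormal_basis b"
  shows "(\<Sum>i\<in>UNIV. b i $ l * cnj (b i $ j)) = (if l = j then 1 else 0)"
proof -
  define U :: "complex^'n^'n" where "U = (\<chi> j i. b i $ j)"
  define W :: "complex^'n^'n" where "W = (\<chi> i j. cnj (b i $ j))"
  have "W ** U = mat 1"
    using assms unfolding orthonormal_basis_def cinner_def
    by (simp add: U_def W_def matrix_matrix_mult_def mat_def vec_eq_iff)
  hence "U ** W = mat 1" using matrix_left_right_inverse by blast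
  hence "(U ** W) $ l $ j = mat 1 $ l $ j" by simp
  thus ?thesis by (simp add: U_def W_def matrix_matrix_mult_def mat_def)
qed

lemma prob_props:
  fixes \<rho> :: "complex ^ 'n ^ 'n" and b :: "'n \<Rightarrow> complex ^ 'n"
  assumes "density_op \<rho>" "orthonormal_basis b"
  shows "outcome_prob \<rho> b i \<ge> 0" "(\<Sum>i\<in>UNIV. outcome_prob \<rho> b i) = 1"
proof -
  show "outcome_prob \<rho> b i \<ge> 0" using assms(1) unfolding density_op_def outcome_prob_def by blast
  have "(\<Sum>i\<in>UNIV. cinner (b i) (\<rho> *v b i))
      = (\<Sum>i\<in>UNIV. \<Sum>j\<in>UNIV. \<Sum>l\<in>UNIV. \<rho> $ j $ l * (b i $ l * cnj (b i $ j)))"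
    unfolding cinner_def matrix_vector_mult_def
    by (simp add: sum_distrib_left mult_ac)
  also have "\<dots> = (\<Sum>j\<in>UNIV. \<Sum>l\<in>UNIV. \<rho> $ j $ l * (\<Sum>i\<in>UNIV. b i $ l * cnj (b i $ j)))"
    by (simp add: sum_distrib_left) (subst sum.swap, rule sum.cong, simp, subst sum.swap, simp)
  also have "\<dots> = (\<Sum>j\<in>UNIV. \<rho> $ j $ j)"
    by (simp add: onb_complete[OF assms(2)] if_distrib cong: if_cong)
  also have "\<dots> = 1" using assms(1) unfolding density_op_def by blast
  finally show "(\<Sum>i\<in>UNIV. outcome_prob \<rho> b i) = 1"
    unfolding outcome_prob_def by (metis Re_sum one_complex.sel)
qed



lemma shannon_nat: "shannon p * ln 2 = (\<Sum>i\<in>UNIV. - (p i * ln (p i)))"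
proof -
  have "(if p i = 0 then 0 else p i * log 2 (p i)) = p i * ln (p i) / ln 2" for i
    by (simp add: log_def)
  hence "shannon p = - (\<Sum>i\<in>UNIV. p i * ln (p i) / ln 2)" unfolding shannon_def by simp
  thus ?thesis by (simp add: sum_divide_distrib[symmetric] sum_negf)
qed

lemma shannon_nonneg:
  assumes "\<And>i. 0 \<le> p i" "\<And>i. p i \<le> 1" shows "0 \<le> shannon p"
proof -
  have "p i * ln (p i) \<le> 0" for i
  proof (cases "p i = 0")
    case False
    hence "ln (p i) \<le> 0" using assms[of i] by simp
    thus ?thesis using assms[of i] by (simp add: mult_nonneg_nonpos)
  qed simp
  hence "0 \<le> (\<Sum>i\<in>UNIV. - (p i * ln (p i)))" by (intro sum_nonneg) auto
  hence "0 \<le> shannon p * ln 2" using shannon_nat[of p] by simp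
  thus ?thesis by (simp add: zero_le_mult_iff)
qed

lemma entropy_bound:
  fixes p :: "'n::finite \<Rightarrow> real" and K :: nat
  assumes K: "K \<ge> 1" and nn: "\<And>i. 0 \<le> p i" and s: "(\<Sum>i\<in>UNIV. p i) = 1"
  shows "alp (real K) - bet (real K) * (\<Sum>i\<in>UNIV. (p i)\<^sup>2) \<le> shannon p * ln 2"
proof -
  have c: "0 \<le> (\<Sum>i\<in>UNIV. hK (real K) (p i))" using core[OF K, of UNIV p] nn s by simp
  have "(\<Sum>i\<in>UNIV. hK (real K) (p i)) =
        (\<Sum>i\<in>UNIV. - (p i * ln (p i))) + bet (real K) * (\<Sum>i\<in>UNIV. (p i)\<^sup>2) - alp (real K) * (\<Sum>i\<in>UNIV. p i)"
    unfolding hK_def gK_def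
    by (simp add: sum.distrib sum_subtractf sum_distrib_left sum_distrib_right sum_negf algebra_simps power2_eq_square)
  thus ?thesis using c s shannon_nat[of p] by simp
qed

theorem theorem2:
  fixes \<rho> :: "complex ^ 'n ^ 'n"
    and B :: "nat \<Rightarrow> 'n \<Rightarrow> complex ^ 'n"
    and M :: nat and C :: real
  assumes "CARD('n) \<ge> 2"
    and "density_op \<rho>"
    and "mutually_unbiased M B"
    and "C > 0"
    and "(\<Sum>m<M. \<Sum>i\<in>UNIV. (outcome_prob \<rho> (B m) i)\<^sup>2) \<le> C"
  shows "(let K = real_of_int \<lfloor>real M / C\<rfloor>; a = real M / C - K
          in a * C * (K + 1) * log 2 (K + 1) + (1 - a) * C * K * log 2 K)
         \<le> (\<Sum>m<M. shannon (outcome_prob \<rho> (B m)))"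
proof -
  define p where "p = (\<lambda>m. outcome_prob \<rho> (B m))"
  have onb: "orthonormal_basis (B m)" if "m < M" for m
    using assms(3) that unfolding mutually_unbiased_def by blast
  have pnn: "0 \<le> p m i" if "m < M" for m i unfolding p_def using prob_props(1)[OF assms(2) onb[OF that]] .
  have ps: "(\<Sum>i\<in>UNIV. p m i) = 1" if "m < M" for m unfolding p_def using prob_props(2)[OF assms(2) onb[OF that]] .
  have ple: "p m i \<le> 1" if "m < M" for m i
  proof -
    have "p m i \<le> (\<Sum>i\<in>UNIV. p m i)" by (rule member_le_sum) (use pnn[OF that] in auto)
    thus ?thesis using ps[OF that] by simp
  qed
  have Hnn: "0 \<le> (\<Sum>m<M. shannon (p m))"
  proof (intro sum_nonneg)
    fix m assume "m \<in> {..<M}"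
    thus "0 \<le> shannon (p m)" by (intro shannon_nonneg) (use pnn ple in auto)
  qed
  define Ki where "Ki = \<lfloor>real M / C\<rfloor>"
  have Ki0: "Ki \<ge> 0" unfolding Ki_def using assms(4) by simp
  define K where "K = nat Ki"
  have KK: "real_of_int Ki = real K" unfolding K_def using Ki0 by simp
  define a where "a = real M / C - real K"
  have lhs: "(let K = real_of_int \<lfloor>real M / C\<rfloor>; a = real M / C - K
          in a * C * (K + 1) * log 2 (K + 1) + (1 - a) * C * K * log 2 K)
        = a * C * (real K + 1) * log 2 (real K + 1) + (1 - a) * C * real K * log 2 (real K)"
    unfolding Let_def Ki_def[symmetric] KK a_def by simp
  show ?thesis
  proof (cases "K = 0")
    case True
    thus ?thesis using lhs Hnn unfolding p_def by simp
  next
    case False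
    hence K1: "K \<ge> 1" by simp
    have eb: "alp (real K) - bet (real K) * (\<Sum>i\<in>UNIV. (p m i)\<^sup>2) \<le> shannon (p m) * ln 2"
      if "m < M" for m using entropy_bound[OF K1, of "p m"] pnn[OF that] ps[OF that] by blast
    have "(\<Sum>m<M. alp (real K) - bet (real K) * (\<Sum>i\<in>UNIV. (p m i)\<^sup>2)) \<le> (\<Sum>m<M. shannon (p m) * ln 2)"
      by (rule sum_mono) (use eb in auto)
    hence s1: "real M * alp (real K) - bet (real K) * (\<Sum>m<M. \<Sum>i\<in>UNIV. (p m i)\<^sup>2)
               \<le> (\<Sum>m<M. shannon (p m)) * ln 2"
      by (simp add: sum_subtractf sum_distrib_left sum_distrib_right)
    have bnn: "bet (real K) \<ge> 0" using bet_bounds[of "real K"] K1 by simp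
    have "bet (real K) * (\<Sum>m<M. \<Sum>i\<in>UNIV. (p m i)\<^sup>2) \<le> bet (real K) * C"
      using assms(5) bnn unfolding p_def by (intro mult_left_mono) auto
    with s1 have s2: "real M * alp (real K) - bet (real K) * C \<le> (\<Sum>m<M. shannon (p m)) * ln 2"
      by linarith
    have aC: "a * C = real M - real K * C" unfolding a_def using assms(4) by (simp add: field_simps)
    have "(a * C * (real K + 1) * log 2 (real K + 1) + (1 - a) * C * real K * log 2 (real K)) * ln 2
        = a * C * (real K + 1) * (log 2 (real K + 1) * ln 2) + (1 - a) * C * real K * (log 2 (real K) * ln 2)"
      by (simp add: algebra_simps)
    also have "\<dots> = (a * C) * (real K + 1) * ln (real K + 1) + (C - a * C) * real K * ln (real K)"
      by (simp add: log_def algebra_simps)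
    also have "\<dots> = real M * alp (real K) - bet (real K) * C"
      unfolding aC alp_def bet_def by (simp add: algebra_simps)
    finally have "(a * C * (real K + 1) * log 2 (real K + 1) + (1 - a) * C * real K * log 2 (real K)) * ln 2
        \<le> (\<Sum>m<M. shannon (p m)) * ln 2" using s2 by simp
    hence "a * C * (real K + 1) * log 2 (real K + 1) + (1 - a) * C * real K * log 2 (real K)
        \<le> (\<Sum>m<M. shannon (p m))" by simp
    thus ?thesis using lhs unfolding p_def by simp
  qed
qed


end
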